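(* Let $({\cal A},{\cal A}_0)$ be a locally convex quasi *-algebra with identity and topology $\tau$, let $\omega_0$ be a positive linear functional on ${\cal A}_0$ with $\omega_0(a^*a)\le p(a)^2$ for all $a\in{\cal A}_0$ for some $\tau$-continuous seminorm $p$, let $\omega=\tilde\omega_0$ be its continuous extension to ${\cal A}$ and $\pi_\omega$ its GNS representation. Then $\pi_\omega({\cal A})'_w=\pi_\omega({\cal A}_0)'_w$.
   Context: A locally convex quasi *-algebra $({\cal A},{\cal A}_0)$: ${\cal A}_0$ is a *-algebra with a locally convex topology $\tau$ making the involution and the multiplications $a\mapsto ab$, $a\mapsto ba$ ($b\in{\cal A}_0$) continuous, ${\cal A}$ is the $\tau$-completion with involution and products $ax,xa$ ($a\in{\cal A},x\in{\cal A}_0$) extended by continuity. GNS construction of $\omega$: Hilbert space ${\cal H}_\omega$, linear $\lambda_\omega:{\cal A}\to{\cal H}_\omega$ with ${\cal D}:=\lambda_\omega({\cal A}_0)$ dense and $\langle\lambda_\omega(x),\lambda_\omega(a)\rangle=\omega(a^*x)$, and $\pi_\omega(x)$, $x\in{\cal A}$, the operator on ${\cal D}$ given by $\pi_\omega(x)\lambda_\omega(a)=\lambda_\omega(xa)$, with $\pi_\omega(x)^\dagger:=\pi_\omega(x)^*\upharpoonright{\cal D}=\pi_\omega(x^* )$. For a *-invariant set ${\mathfrak M}$ of operators with domain ${\cal D}$, the weak commutant is ${\mathfrak M}'_w=\{C\in{\cal B}({\cal H}_\omega):\langle X\xi,C^*\eta\rangle=\langle C\xi,X^\dagger\eta\rangle\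 \forall X\in{\mathfrak M},\ \xi,\eta\in{\cal D}\}$. *)

theory Defs
  imports "HOL-Analysis.Analysis"
begin

definition hnorm :: "('h \<Rightarrow> 'h \<Rightarrow> complex) \<Rightarrow> 'h \<Rightarrow> real" where
  "hnorm ip x = sqrt (Re (ip x x))"

definition hilbert_space ::
  "(complex \<Rightarrow> 'h::ab_group_add \<Rightarrow> 'h) \<Rightarrow> ('h \<Rightarrow> 'h \<Rightarrow> complex) \<Rightarrow> bool" where
  "hilbert_space sc ip \<longleftrightarrow>
     vector_space sc \<and>
     (\<forall>x y z. ip (x + y) z = ip x z + ip y z) \<and>
     (\<forall>c x y. ip (sc c x) y = c * ip x y) \<and>
     (\<forall>x y. ip y x = cnj (ip x y)) \<and>
     (\<forall>x. Im (ip x x) = 0 \<and> Re (ip x x) \<ge> 0) \<and>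
     (\<forall>x. ip x x = 0 \<longrightarrow> x = 0) \<and>
     (\<forall>X :: nat \<Rightarrow> 'h. (\<forall>e>0. \<exists>N. \<forall>m\<ge>N. \<forall>n\<ge>N. hnorm ip (X m - X n) < e)
         \<longrightarrow> (\<exists>l. \<forall>e>0. \<exists>N. \<forall>n\<ge>N. hnorm ip (X n - l) < e))"

definition hdense :: "('h::ab_group_add \<Rightarrow> 'h \<Rightarrow> complex) \<Rightarrow> 'h set \<Rightarrow> bool" where
  "hdense ip D \<longleftrightarrow> (\<forall>x. \<forall>e>0. \<exists>y\<in>D. hnorm ip (x - y) < e)"

definition bounded_op ::
  "(complex \<Rightarrow> 'h::ab_group_add \<Rightarrow> 'h) \<Rightarrow> ('h \<Rightarrow> 'h \<Rightarrow> complex) \<Rightarrow> ('h \<Rightarrow> 'h) \<Rightarrow> bool" where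
  "bounded_op sc ip C \<longleftrightarrow> Vector_Spaces.linear sc sc C \<and> (\<exists>K. \<forall>x. hnorm ip (C x) \<le> K * hnorm ip x)"

definition hadj :: "('h \<Rightarrow> 'h \<Rightarrow> complex) \<Rightarrow> ('h \<Rightarrow> 'h) \<Rightarrow> 'h \<Rightarrow> 'h" where
  "hadj ip C \<eta> = (THE \<zeta>. \<forall>\<xi>. ip (C \<xi>) \<eta> = ip \<xi> \<zeta>)"

definition dagger :: "('h \<Rightarrow> 'h \<Rightarrow> complex) \<Rightarrow> 'h set \<Rightarrow> ('h \<Rightarrow> 'h) \<Rightarrow> 'h \<Rightarrow> 'h" where
  "dagger ip D X \<eta> = (THE \<zeta>. \<forall>\<xi>\<in>D. ip (X \<xi>) \<eta> = ip \<xi> \<zeta>)"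

definition weak_commutant ::
  "(complex \<Rightarrow> 'h::ab_group_add \<Rightarrow> 'h) \<Rightarrow> ('h \<Rightarrow> 'h \<Rightarrow> complex) \<Rightarrow> 'h set \<Rightarrow> ('h \<Rightarrow> 'h) set
     \<Rightarrow> ('h \<Rightarrow> 'h) set" where
  "weak_commutant sc ip D M =
     {C. bounded_op sc ip C \<and>
         (\<forall>X\<in>M. \<forall>\<xi>\<in>D. \<forall>\<eta>\<in>D. ip (X \<xi>) (hadj ip C \<eta>) = ip (C \<xi>) (dagger ip D X \<eta>))}"

definition seminorm_on :: "(complex \<Rightarrow> 'a::ab_group_add \<Rightarrow> 'a) \<Rightarrow> 'a set \<Rightarrow> ('a \<Rightarrow> real) \<Rightarrow> bool" where
  "seminorm_on sc S p \<longleftrightarrow>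
     (\<forall>x\<in>S. \<forall>y\<in>S. p (x + y) \<le> p x + p y) \<and> (\<forall>c. \<forall>x\<in>S. p (sc c x) = cmod c * p x)"

definition cont_seminorm_on :: "('a \<Rightarrow> real) set \<Rightarrow> 'a set \<Rightarrow> ('a \<Rightarrow> real) \<Rightarrow> bool" where
  "cont_seminorm_on P S p \<longleftrightarrow>
     (\<exists>F c. finite F \<and> F \<subseteq> P \<and> (\<forall>x\<in>S. p x \<le> c * (\<Sum>q\<in>F. q x)))"

definition cont_map :: "('a \<Rightarrow> real) set \<Rightarrow> ('a \<Rightarrow> 'a) \<Rightarrow> bool" where
  "cont_map P f \<longleftrightarrow> (\<forall>p\<in>P. cont_seminorm_on P UNIV (\<lambda>x. p (f x)))"

definition complete_lc :: "('a::ab_group_add \<Rightarrow> real) set \<Rightarrow> bool" where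
  "complete_lc P \<longleftrightarrow>
     (\<forall>F::'a filter. F \<noteq> bot \<longrightarrow>
        (\<forall>p\<in>P. \<forall>e>0. eventually (\<lambda>(x, y). p (x - y) < e) (F \<times>\<^sub>F F)) \<longrightarrow>
        (\<exists>l. \<forall>p\<in>P. \<forall>e>0. eventually (\<lambda>x. p (x - l) < e) F))"

text \<open>The ambient type 'a is the completion A; A0 is the dense *-subalgebra;
  mul a b is the (partial) product, meaningful when a or b lies in A0.\<close>

definition lc_quasi_star_algebra_unit ::
  "(complex \<Rightarrow> 'a::ab_group_add \<Rightarrow> 'a) \<Rightarrow> 'a set \<Rightarrow> ('a \<Rightarrow> 'a) \<Rightarrow> ('a \<Rightarrow> 'a \<Rightarrow> 'a)
     \<Rightarrow> 'a \<Rightarrow> ('a \<Rightarrow> real) set \<Rightarrow> bool" where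
  "lc_quasi_star_algebra_unit sc A0 star mul e P \<longleftrightarrow>
     vector_space sc \<and> module.subspace sc A0 \<and>
     (\<forall>x\<in>A0. \<forall>y\<in>A0. mul x y \<in> A0) \<and> (\<forall>x\<in>A0. star x \<in> A0) \<and>
     \<comment> \<open>bilinearity of the products a x, x a  (a \<in> A, x \<in> A0)\<close>
     (\<forall>x\<in>A0. \<forall>a b. mul (a + b) x = mul a x + mul b x \<and> mul x (a + b) = mul x a + mul x b) \<and>
     (\<forall>x\<in>A0. \<forall>y\<in>A0. \<forall>a. mul a (x + y) = mul a x + mul a y \<and> mul (x + y) a = mul x a + mul y a) \<and>
     (\<forall>x\<in>A0. \<forall>a c. mul (sc c a) x = sc c (mul a x) \<and> mul a (sc c x) = sc c (mul a x) \<and>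
        mul (sc c x) a = sc c (mul x a) \<and> mul x (sc c a) = sc c (mul x a)) \<and>
     \<comment> \<open>associativity laws\<close>
     (\<forall>x1\<in>A0. \<forall>x2\<in>A0. \<forall>a.
        mul (mul x1 a) x2 = mul x1 (mul a x2) \<and>
        mul x1 (mul x2 a) = mul (mul x1 x2) a \<and>
        mul (mul a x1) x2 = mul a (mul x1 x2)) \<and>
     \<comment> \<open>involution\<close>
     (\<forall>a. star (star a) = a) \<and> (\<forall>a b. star (a + b) = star a + star b) \<and>
     (\<forall>c a. star (sc c a) = sc (cnj c) (star a)) \<and>
     (\<forall>x\<in>A0. \<forall>a. star (mul a x) = mul (star x) (star a) \<and> star (mul x a) = mul (star a) (star x)) \<and>
     \<comment> \<open>identity\<close>
     e \<in> A0 \<and> (\<forall>a. mul e a = a \<and> mul a e = a) \<and>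
     \<comment> \<open>locally convex topology \<tau> given by the family P of seminorms\<close>
     (\<forall>p\<in>P. seminorm_on sc UNIV p) \<and>
     (\<forall>a. (\<forall>p\<in>P. p a = 0) \<longrightarrow> a = 0) \<and>
     cont_map P star \<and> (\<forall>x\<in>A0. cont_map P (\<lambda>a. mul a x) \<and> cont_map P (\<lambda>a. mul x a)) \<and>
     \<comment> \<open>A is the \<tau>-completion of A0: A complete and A0 dense\<close>
     complete_lc P \<and>
     (\<forall>a. \<forall>F. finite F \<longrightarrow> F \<subseteq> P \<longrightarrow> (\<forall>eps>0. \<exists>x\<in>A0. (\<Sum>q\<in>F. q (a - x)) < eps))"

end

theory Submission
  imports Defs
begin


lemma add_hom_diff:
  fixes f :: "'a::ab_group_add \<Rightarrow> 'b::ab_group_add"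
  assumes "\<And>x y. f (x + y) = f x + f y" shows "f (x - y) = f x - f y"
proof -
  have "f x = f (x - y) + f y" using assms[of "x-y" y] by simp
  thus ?thesis by (simp add: algebra_simps)
qed

context fixes sH :: "complex \<Rightarrow> 'h::ab_group_add \<Rightarrow> 'h" and ip :: "'h \<Rightarrow> 'h \<Rightarrow> complex"
  assumes H: "hilbert_space sH ip"
begin

lemma ip_add1: "ip (x + y) z = ip x z + ip y z" using H[unfolded hilbert_space_def, THEN conjunct2, THEN conjunct1] by blast
lemma ip_cnj: "ip y x = cnj (ip x y)" using H[unfolded hilbert_space_def, THEN conjunct2, THEN conjunct2, THEN conjunct2, THEN conjunct1] by blast
lemma ip_scale1: "ip (sH c x) y = c * ip x y" using H[unfolded hilbert_space_def, THEN conjunct2, THEN conjunct2, THEN conjunct1] by blast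
lemma ip_pos: "Im (ip x x) = 0" "Re (ip x x) \<ge> 0" using H[unfolded hilbert_space_def, THEN conjunct2, THEN conjunct2, THEN conjunct2, THEN conjunct2, THEN conjunct1] by blast+
lemma ip_nondeg: "ip x x = 0 \<Longrightarrow> x = 0" using H[unfolded hilbert_space_def, THEN conjunct2, THEN conjunct2, THEN conjunct2, THEN conjunct2, THEN conjunct2, THEN conjunct1] by blast
lemma vsH: "vector_space sH" using H[unfolded hilbert_space_def, THEN conjunct1] .

lemma ip_add2: "ip z (x + y) = ip z x + ip z y"
  by (metis ip_cnj ip_add1 complex_cnj_add)
lemma ip_diff1: "ip (x - y) z = ip x z - ip y z"
  using add_hom_diff[of "\<lambda>x. ip x z"] ip_add1 by blast
lemma ip_diff2: "ip z (x - y) = ip z x - ip z y"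
  using add_hom_diff[of "\<lambda>x. ip z x"] ip_add2 by blast
lemma ip_zero1[simp]: "ip 0 z = 0" using ip_diff1[of 0 0 z] by simp
lemma ip_zero2[simp]: "ip z 0 = 0" using ip_diff2[of z 0 0] by simp
lemma ip_minus1: "ip (-x) z = - ip x z" using ip_diff1[of 0 x z] by simp
lemma ip_minus2: "ip z (-x) = - ip z x" using ip_diff2[of z 0 x] by simp
lemma ip_scale2: "ip x (sH c y) = cnj c * ip x y"
  by (metis ip_cnj ip_scale1 complex_cnj_mult complex_cnj_cnj)

lemma ip_self: "ip x x = complex_of_real (Re (ip x x))"
  using ip_pos(1)[of x] by (simp add: complex_eq_iff)

lemma hnorm_nonneg: "hnorm ip x \<ge> 0" unfolding hnorm_def using ip_pos(2)[of x] by simp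
lemma hnorm_sq: "(hnorm ip x)^2 = Re (ip x x)" unfolding hnorm_def using ip_pos(2) by simp
lemma hnorm_minus: "hnorm ip (-x) = hnorm ip x" unfolding hnorm_def by (simp add: ip_minus1 ip_minus2)
lemma hnorm_commute: "hnorm ip (x - y) = hnorm ip (y - x)"
  by (metis hnorm_minus minus_diff_eq)

lemma cauchy_schwarz: "cmod (ip x y) \<le> hnorm ip x * hnorm ip y"
proof (cases "Re (ip y y) = 0")
  case True
  then have "ip y y = 0" by (metis ip_self of_real_0)
  then have "y = 0" by (rule ip_nondeg)
  then show ?thesis by (simp add: hnorm_nonneg)
next
  case False
  define B where "B = Re (ip y y)"
  define A where "A = Re (ip x x)"
  define C where "C = ip x y"
  have Bpos: "B > 0" using False ip_pos(2)[of y] unfolding B_def by linarith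
  have yy: "ip y y = complex_of_real B" using ip_self B_def by metis
  have yx: "ip y x = cnj C" using ip_cnj C_def by metis
  have cc: "complex_of_real (cmod C) * complex_of_real (cmod C) = C * cnj C"
    using complex_norm_square[of C] by (simp add: power2_eq_square)
  define t where "t = C / complex_of_real B"
  define z where "z = x - sH t y"
  have "ip z z = ip x x - cnj t * ip x y - t * ip y x + t * cnj t * ip y y"
    unfolding z_def by (simp add: ip_diff1 ip_diff2 ip_scale1 ip_scale2 algebra_simps)
  also have "\<dots> = ip x x - complex_of_real ((cmod C)^2 / B)"
    unfolding t_def yy yx C_def[symmetric] using Bpos cc
    by (simp add: field_simps power2_eq_square)
  finally have "Re (ip z z) = A - (cmod C)^2 / B" unfolding A_def by simp
  with ip_pos(2)[of z] have "(cmod C)^2 / B \<le> A" by linarith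
  then have "(cmod C)^2 \<le> A * B" using Bpos by (simp add: field_simps)
  also have "A * B = (hnorm ip x * hnorm ip y)^2" unfolding A_def B_def hnorm_sq power_mult_distrib by simp
  finally show ?thesis unfolding C_def
    using hnorm_nonneg power2_le_imp_le by (metis mult_nonneg_nonneg)
qed

lemma hnorm_triangle: "hnorm ip (x + y) \<le> hnorm ip x + hnorm ip y"
proof -
  have "Re (ip (x+y) (x+y)) = Re (ip x x) + Re (ip y y) + Re (ip x y) + Re (ip y x)"
    by (simp add: ip_add1 ip_add2)
  also have "Re (ip y x) = Re (ip x y)" using ip_cnj[of y x] by simp
  also have "Re (ip x y) \<le> hnorm ip x * hnorm ip y"
    using cauchy_schwarz[of x y] complex_Re_le_cmod order_trans by blast
  finally have "(hnorm ip (x+y))^2 \<le> (hnorm ip x + hnorm ip y)^2"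
    unfolding hnorm_sq[symmetric] by (simp add: power2_eq_square algebra_simps)
  then show ?thesis using hnorm_nonneg by (meson add_nonneg_nonneg power2_le_imp_le)
qed

end


lemma sum_nonneg_P: "\<forall>q\<in>P. \<forall>x. q x \<ge> (0::real) \<Longrightarrow> F \<subseteq> P \<Longrightarrow> (\<Sum>q\<in>F. q x) \<ge> 0"
  by (meson subsetD sum_nonneg)

lemma sum_mono_P: "\<forall>q\<in>P. \<forall>x. q x \<ge> (0::real) \<Longrightarrow> finite G \<Longrightarrow> F \<subseteq> G \<Longrightarrow> G \<subseteq> P
   \<Longrightarrow> (\<Sum>q\<in>F. q x) \<le> (\<Sum>q\<in>G. q x)"
  by (rule sum_mono2) auto

lemma csn_obtain:
  assumes "cont_seminorm_on P S \<phi>" "\<forall>q\<in>P. \<forall>x. q x \<ge> (0::real)"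
  obtains F K where "finite F" "F \<subseteq> P" "K \<ge> 0" "\<forall>x\<in>S. \<phi> x \<le> K * (\<Sum>q\<in>F. q x)"
proof -
  obtain F c where F: "finite F" "F \<subseteq> P" "\<forall>x\<in>S. \<phi> x \<le> c * (\<Sum>q\<in>F. q x)"
    using assms(1) unfolding cont_seminorm_on_def by blast
  have "\<forall>x\<in>S. \<phi> x \<le> max c 0 * (\<Sum>q\<in>F. q x)"
  proof
    fix x assume "x \<in> S"
    have "c * (\<Sum>q\<in>F. q x) \<le> max c 0 * (\<Sum>q\<in>F. q x)"
      using sum_nonneg_P[OF assms(2) F(2)] by (simp add: mult_right_mono)
    then show "\<phi> x \<le> max c 0 * (\<Sum>q\<in>F. q x)" using F(3) \<open>x \<in> S\<close> by fastforce
  qed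
  then show ?thesis using that F by (meson max.cobounded2)
qed

lemma csn_basic: "q \<in> P \<Longrightarrow> cont_seminorm_on P S q"
  unfolding cont_seminorm_on_def by (rule exI[of _ "{q}"], rule exI[of _ 1]) simp

lemma csn_scale:
  assumes "cont_seminorm_on P S \<phi>" "\<forall>q\<in>P. \<forall>x. q x \<ge> (0::real)" "c \<ge> 0"
  shows "cont_seminorm_on P S (\<lambda>x. c * \<phi> x)"
proof -
  obtain F K where F: "finite F" "F \<subseteq> P" "K \<ge> 0" "\<forall>x\<in>S. \<phi> x \<le> K * (\<Sum>q\<in>F. q x)"
    using csn_obtain[OF assms(1,2)] by blast
  have "\<forall>x\<in>S. c * \<phi> x \<le> (c * K) * (\<Sum>q\<in>F. q x)"
    using F(4) assms(3) by (metis mult.assoc mult_left_mono)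
  then show ?thesis unfolding cont_seminorm_on_def using F by blast
qed

lemma csn_comp:
  assumes r: "cont_seminorm_on P UNIV r" and h: "\<forall>q\<in>P. cont_seminorm_on P UNIV (\<lambda>x. q (h x))"
    and nn: "\<forall>q\<in>P. \<forall>x. q x \<ge> (0::real)"
  shows "cont_seminorm_on P UNIV (\<lambda>x. r (h x))"
proof -
  obtain G K where G: "finite G" "G \<subseteq> P" "K \<ge> 0" "\<forall>x\<in>UNIV. r x \<le> K * (\<Sum>q\<in>G. q x)"
    by (rule csn_obtain[OF r nn])
  have "\<forall>q\<in>G. \<exists>FK. finite (fst FK) \<and> fst FK \<subseteq> P \<and> snd FK \<ge> 0 \<and>
          (\<forall>x. q (h x) \<le> snd FK * (\<Sum>q'\<in>fst FK. q' x))"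
  proof
    fix q assume "q \<in> G"
    then have "cont_seminorm_on P UNIV (\<lambda>x. q (h x))" using h G(2) by blast
    then obtain F K where "finite F" "F \<subseteq> P" "K \<ge> 0" "\<forall>x\<in>UNIV. q (h x) \<le> K * (\<Sum>q\<in>F. q x)"
      by (rule csn_obtain[OF _ nn])
    then show "\<exists>FK. finite (fst FK) \<and> fst FK \<subseteq> P \<and> snd FK \<ge> 0 \<and>
          (\<forall>x. q (h x) \<le> snd FK * (\<Sum>q'\<in>fst FK. q' x))"
      by (intro exI[of _ "(F, K)"]) auto
  qed
  from bchoice[OF this] obtain FK where FK: "\<forall>q\<in>G. finite (fst (FK q)) \<and> fst (FK q) \<subseteq> P \<and> snd (FK q) \<ge> 0 \<and>
          (\<forall>x. q (h x) \<le> snd (FK q) * (\<Sum>q'\<in>fst (FK q). q' x))"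
    by blast
  define H where "H = (\<Union>q\<in>G. fst (FK q))"
  define M where "M = (\<Sum>q\<in>G. snd (FK q))"
  have Hfin: "finite H" unfolding H_def using G(1) FK by (intro finite_UN_I) auto
  have HP: "H \<subseteq> P" unfolding H_def using FK by blast
  have "\<forall>x. r (h x) \<le> (K * M) * (\<Sum>q\<in>H. q x)"
  proof
    fix x
    have a1: "r (h x) \<le> K * (\<Sum>q\<in>G. q (h x))" using G(4) by blast
    have a2: "(\<Sum>q\<in>G. q (h x)) \<le> (\<Sum>q\<in>G. snd (FK q) * (\<Sum>q'\<in>H. q' x))"
    proof (rule sum_mono)
      fix q assume q: "q \<in> G"
      have b1: "q (h x) \<le> snd (FK q) * (\<Sum>q'\<in>fst (FK q). q' x)" using FK q by blast
      have sub: "fst (FK q) \<subseteq> H" using q unfolding H_def by blast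
      have b2: "(\<Sum>q'\<in>fst (FK q). q' x) \<le> (\<Sum>q'\<in>H. q' x)"
        by (rule sum_mono_P[OF nn Hfin sub HP])
      have b3: "snd (FK q) \<ge> 0" using FK q by blast
      have "snd (FK q) * (\<Sum>q'\<in>fst (FK q). q' x) \<le> snd (FK q) * (\<Sum>q'\<in>H. q' x)"
        by (rule mult_left_mono[OF b2 b3])
      then show "q (h x) \<le> snd (FK q) * (\<Sum>q'\<in>H. q' x)" using b1 by linarith
    qed
    have a3: "K * (\<Sum>q\<in>G. q (h x)) \<le> K * (\<Sum>q\<in>G. snd (FK q) * (\<Sum>q'\<in>H. q' x))"
      by (rule mult_left_mono[OF a2 G(3)])
    have a4: "(\<Sum>q\<in>G. snd (FK q) * (\<Sum>q'\<in>H. q' x)) = M * (\<Sum>q'\<in>H. q' x)"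
      unfolding M_def by (simp add: sum_distrib_right)
    show "r (h x) \<le> (K * M) * (\<Sum>q\<in>H. q x)" using a1 a3 a4 by (simp add: mult.assoc)
  qed
  then show ?thesis unfolding cont_seminorm_on_def
    apply (rule_tac exI[of _ H], rule_tac exI[of _ "K * M"]) using Hfin HP by blast
qed

lemma ext_dense:
  fixes f g :: "'a::ab_group_add \<Rightarrow> complex"
  assumes nn: "\<forall>q\<in>P. \<forall>x. q x \<ge> 0"
    and dense: "\<forall>a F. finite F \<longrightarrow> F \<subseteq> P \<longrightarrow> (\<forall>eps>0. \<exists>x\<in>A0. (\<Sum>q\<in>F. q (a - x)) < eps)"
    and eq: "\<forall>x\<in>A0. f x = g x"
    and f: "\<forall>x y. cmod (f x - f y) \<le> \<phi> (x - y)" "cont_seminorm_on P UNIV \<phi>"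
    and g: "\<forall>x y. cmod (g x - g y) \<le> \<psi> (x - y)" "cont_seminorm_on P UNIV \<psi>"
  shows "f x = g x"
proof (rule ccontr)
  assume ne: "f x \<noteq> g x"
  define d where "d = cmod (f x - g x)"
  have dpos: "d > 0" using ne unfolding d_def by simp
  obtain F1 K1 where F1: "finite F1" "F1 \<subseteq> P" "K1 \<ge> 0" "\<forall>x\<in>UNIV. \<phi> x \<le> K1 * (\<Sum>q\<in>F1. q x)"
    using csn_obtain[OF f(2) nn] by blast
  obtain F2 K2 where F2: "finite F2" "F2 \<subseteq> P" "K2 \<ge> 0" "\<forall>x\<in>UNIV. \<psi> x \<le> K2 * (\<Sum>q\<in>F2. q x)"
    using csn_obtain[OF g(2) nn] by blast
  define eps where "eps = d / (2 * (K1 + K2 + 1))"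
  have epos: "eps > 0" using dpos F1(3) F2(3) unfolding eps_def by simp
  have Ufin: "finite (F1 \<union> F2)" using F1(1) F2(1) by simp
  have UP: "F1 \<union> F2 \<subseteq> P" using F1(2) F2(2) by simp
  have "\<exists>x'\<in>A0. (\<Sum>q\<in>F1 \<union> F2. q (x - x')) < eps"
    using dense[rule_format, OF Ufin UP epos] .
  then obtain x' where x': "x' \<in> A0" "(\<Sum>q\<in>F1 \<union> F2. q (x - x')) < eps" by blast
  have "(\<Sum>q\<in>F1. q (x - x')) \<le> (\<Sum>q\<in>F1 \<union> F2. q (x - x'))"
    by (rule sum_mono_P[OF nn Ufin Un_upper1 UP])
  then have s1: "(\<Sum>q\<in>F1. q (x - x')) \<le> eps" using x'(2) by linarith
  have "(\<Sum>q\<in>F2. q (x - x')) \<le> (\<Sum>q\<in>F1 \<union> F2. q (x - x'))"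
    by (rule sum_mono_P[OF nn Ufin Un_upper2 UP])
  then have s2: "(\<Sum>q\<in>F2. q (x - x')) \<le> eps" using x'(2) by linarith
  have "\<phi> (x - x') \<le> K1 * (\<Sum>q\<in>F1. q (x - x'))" using F1(4) by blast
  moreover have "K1 * (\<Sum>q\<in>F1. q (x - x')) \<le> K1 * eps" by (rule mult_left_mono[OF s1 F1(3)])
  moreover have "cmod (f x - f x') \<le> \<phi> (x - x')" using f(1) by blast
  ultimately have c1: "cmod (f x - f x') \<le> K1 * eps" by linarith
  have "\<psi> (x - x') \<le> K2 * (\<Sum>q\<in>F2. q (x - x'))" using F2(4) by blast
  moreover have "K2 * (\<Sum>q\<in>F2. q (x - x')) \<le> K2 * eps" by (rule mult_left_mono[OF s2 F2(3)])
  moreover have "cmod (g x - g x') \<le> \<psi> (x - x')" using g(1) by blast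
  ultimately have c2: "cmod (g x - g x') \<le> K2 * eps" by linarith
  have "f x' = g x'" using eq x'(1) by blast
  then have "f x - g x = (f x - f x') - (g x - g x')" by simp
  then have "d \<le> cmod (f x - f x') + cmod (g x - g x')" unfolding d_def by (metis norm_triangle_ineq4)
  moreover have e: "eps * (2 * (K1 + K2 + 1)) = d" unfolding eps_def using F1(3) F2(3) by simp
  moreover have "(K1 + K2) * eps < (2 * (K1 + K2 + 1)) * eps"
    by (rule mult_strict_right_mono) (use epos F1(3) F2(3) in auto)
  ultimately have "d < d" using c1 c2 by (simp add: algebra_simps)
  then show False by simp
qed



theorem proposition10:
  fixes sA :: "complex \<Rightarrow> 'a::ab_group_add \<Rightarrow> 'a"
    and A0 :: "'a set" and star :: "'a \<Rightarrow> 'a" and mul :: "'a \<Rightarrow> 'a \<Rightarrow> 'a" and e :: 'a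
    and P :: "('a \<Rightarrow> real) set"
    and \<omega>0 \<omega> :: "'a \<Rightarrow> complex"
    and sH :: "complex \<Rightarrow> 'h::ab_group_add \<Rightarrow> 'h" and ip :: "'h \<Rightarrow> 'h \<Rightarrow> complex"
    and lam :: "'a \<Rightarrow> 'h" and pi :: "'a \<Rightarrow> 'h \<Rightarrow> 'h"
  assumes qa: "lc_quasi_star_algebra_unit sA A0 star mul e P"
    \<comment> \<open>\<omega>0 positive linear functional on A0\<close>
    and w0_add: "\<forall>x\<in>A0. \<forall>y\<in>A0. \<omega>0 (x + y) = \<omega>0 x + \<omega>0 y"
    and w0_scale: "\<forall>c. \<forall>x\<in>A0. \<omega>0 (sA c x) = c * \<omega>0 x"
    and w0_pos: "\<forall>a\<in>A0. Im (\<omega>0 (mul (star a) a)) = 0 \<and> Re (\<omega>0 (mul (star a) a)) \<ge> 0"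
    \<comment> \<open>domination by a \<tau>-continuous seminorm p\<close>
    and w0_bound: "\<exists>p. seminorm_on sA A0 p \<and> cont_seminorm_on P A0 p \<and>
                      (\<forall>a\<in>A0. Re (\<omega>0 (mul (star a) a)) \<le> (p a)\<^sup>2)"
    \<comment> \<open>\<omega> is the continuous extension of \<omega>0 to A\<close>
    and w_lin: "Vector_Spaces.linear sA (*) \<omega>"
    and w_cont: "cont_seminorm_on P UNIV (\<lambda>x. cmod (\<omega> x))"
    and w_ext: "\<forall>a\<in>A0. \<omega> a = \<omega>0 a"
    \<comment> \<open>GNS construction (H, \<lambda>, \<pi>) of \<omega>\<close>
    and H: "hilbert_space sH ip"
    and lam_lin: "Vector_Spaces.linear sA sH lam"
    and lam_dense: "hdense ip (lam ` A0)"
    and lam_ip: "\<forall>x. \<forall>a\<in>A0. ip (lam x) (lam a) = \<omega> (mul (star a) x)"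
    and pi_def: "\<forall>x. \<forall>a\<in>A0. pi x (lam a) = lam (mul x a)"
  shows "weak_commutant sH ip (lam ` A0) (pi ` UNIV) = weak_commutant sH ip (lam ` A0) (pi ` A0)"
proof -
  obtain vsA: "vector_space sA" and sub: "module.subspace sA A0"
    and c3: "\<forall>x\<in>A0. \<forall>y\<in>A0. mul x y \<in> A0" and c4: "\<forall>x\<in>A0. star x \<in> A0"
    and c5: "\<forall>x\<in>A0. \<forall>a b. mul (a + b) x = mul a x + mul b x \<and> mul x (a + b) = mul x a + mul x b"
    and c6: "\<forall>x\<in>A0. \<forall>y\<in>A0. \<forall>a. mul a (x + y) = mul a x + mul a y \<and> mul (x + y) a = mul x a + mul y a"
    and c7: "\<forall>x\<in>A0. \<forall>a c. mul (sA c a) x = sA c (mul a x) \<and> mul a (sA c x) = sA c (mul a x) \<and>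
        mul (sA c x) a = sA c (mul x a) \<and> mul x (sA c a) = sA c (mul x a)"
    and c8: "\<forall>x1\<in>A0. \<forall>x2\<in>A0. \<forall>a.
        mul (mul x1 a) x2 = mul x1 (mul a x2) \<and>
        mul x1 (mul x2 a) = mul (mul x1 x2) a \<and>
        mul (mul a x1) x2 = mul a (mul x1 x2)"
    and c9: "\<forall>a. star (star a) = a" and c10: "\<forall>a b. star (a + b) = star a + star b"
    and c11: "\<forall>c a. star (sA c a) = sA (cnj c) (star a)"
    and c12: "\<forall>x\<in>A0. \<forall>a. star (mul a x) = mul (star x) (star a) \<and> star (mul x a) = mul (star a) (star x)"
    and c13: "e \<in> A0" and c14: "\<forall>a. mul e a = a \<and> mul a e = a"
    and c15: "\<forall>p\<in>P. seminorm_on sA UNIV p"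
    and c16: "\<forall>a. (\<forall>p\<in>P. p a = 0) \<longrightarrow> a = 0"
    and c17: "cont_map P star" and c18: "\<forall>x\<in>A0. cont_map P (\<lambda>a. mul a x) \<and> cont_map P (\<lambda>a. mul x a)"
    and c19: "complete_lc P"
    and dense: "\<forall>a F. finite F \<longrightarrow> F \<subseteq> P \<longrightarrow> (\<forall>eps>0. \<exists>x\<in>A0. (\<Sum>q\<in>F. q (a - x)) < eps)"
    using qa unfolding lc_quasi_star_algebra_unit_def by (elim conjE) (rule that; assumption)
  then have modA: "module sA" by (simp add: module_iff_vector_space)
  have A0_diff: "x \<in> A0 \<Longrightarrow> y \<in> A0 \<Longrightarrow> x - y \<in> A0" for x y
    using module.subspace_diff[OF modA sub] by blast
  have A0_0: "0 \<in> A0" using module.subspace_0[OF modA sub] .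
  have A0_mul: "x \<in> A0 \<Longrightarrow> y \<in> A0 \<Longrightarrow> mul x y \<in> A0" for x y using c3 by blast
  have A0_star: "x \<in> A0 \<Longrightarrow> star x \<in> A0" for x using c4 by blast
  have mul_add1: "x \<in> A0 \<Longrightarrow> mul (a + b) x = mul a x + mul b x" for x a b using c5 by blast
  have mul_add2: "x \<in> A0 \<Longrightarrow> mul x (a + b) = mul x a + mul x b" for x a b using c5 by blast
  have mul_diff1: "x \<in> A0 \<Longrightarrow> mul (a - b) x = mul a x - mul b x" for x a b
    using add_hom_diff[of "\<lambda>a. mul a x"] mul_add1 by blast
  have mul_diff2: "x \<in> A0 \<Longrightarrow> mul x (a - b) = mul x a - mul x b" for x a b
    using add_hom_diff[of "\<lambda>a. mul x a"] mul_add2 by blast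
  have assoc: "x1 \<in> A0 \<Longrightarrow> x2 \<in> A0 \<Longrightarrow> mul (mul a x1) x2 = mul a (mul x1 x2)" for x1 x2 a
    using c8 by blast
  have star_star: "star (star a) = a" for a using c9 by blast
  have star_mul: "x \<in> A0 \<Longrightarrow> star (mul x a) = mul (star a) (star x)" for x a using c12 by blast
  have star_diff: "star (a - b) = star a - star b" for a b
    using add_hom_diff[of star] c10 by blast
  have Psn: "\<forall>p\<in>P. seminorm_on sA UNIV p" using c15 .
  have cstar: "cont_map P star" using c17 .
  have cmul: "x \<in> A0 \<Longrightarrow> cont_map P (\<lambda>a. mul a x) \<and> cont_map P (\<lambda>a. mul x a)" for x
    using c18 by blast
  have sm1: "sA (-1) x = - x" for x using module.scale_minus_left[OF modA, of 1 x] module.scale_one[OF modA] by simp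
  have sm0: "sA 0 x = 0" for x using module.scale_zero_left[OF modA] by simp
  have sn_tri: "q \<in> P \<Longrightarrow> q (x + y) \<le> q x + q y" for q x y using Psn unfolding seminorm_on_def by blast
  have sn_minus: "q \<in> P \<Longrightarrow> q (- x) = q x" for q x
    using Psn sm1[of x] unfolding seminorm_on_def by (metis UNIV_I mult_cancel_right1 norm_minus_cancel norm_one)
  have Pnn: "\<forall>q\<in>P. \<forall>x. q x \<ge> 0"
  proof (intro ballI allI)
    fix q x assume q: "q \<in> P"
    have "q 0 = 0" using Psn q sm0[of 0] unfolding seminorm_on_def by (metis UNIV_I mult_zero_left norm_zero)
    then have "0 \<le> q x + q (-x)" using sn_tri[OF q, of x "-x"] by simp
    then show "q x \<ge> 0" using sn_minus[OF q] by simp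
  qed
  have w_add: "\<omega> (a + b) = \<omega> a + \<omega> b" for a b using Vector_Spaces.linear_iff[THEN iffD1, OF w_lin] by blast
  have w_diff: "\<omega> (a - b) = \<omega> a - \<omega> b" for a b using add_hom_diff[of \<omega>] w_add by blast
  have lam_add: "lam (a + b) = lam a + lam b" for a b using Vector_Spaces.linear_iff[THEN iffD1, OF lam_lin] by blast
  have lam_diff: "lam (a - b) = lam a - lam b" for a b using add_hom_diff[of lam] lam_add by blast
  note ipd1 = ip_diff1[OF H] and ipd2 = ip_diff2[OF H] and CS = cauchy_schwarz[OF H]
   and hnn = hnorm_nonneg[OF H] and hsq = hnorm_sq[OF H] and htri = hnorm_triangle[OF H]
   and hmin = hnorm_minus[OF H] and ipcnj = ip_cnj[OF H]
  have uniq: "z1 = z2" if h: "\<forall>a\<in>A0. ip (lam a) z1 = ip (lam a) z2" for z1 z2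
  proof -
    define w where "w = z1 - z2"
    have orth: "ip (lam a) w = 0" if "a \<in> A0" for a using h that unfolding w_def by (simp add: ipd2)
    have ge: "hnorm ip w \<le> hnorm ip (w - lam a)" if "a \<in> A0" for a
    proof -
      have "ip (w - lam a) (w - lam a) = ip w w - ip w (lam a) - ip (lam a) w + ip (lam a) (lam a)"
        by (simp add: ipd1 ipd2)
      also have "ip w (lam a) = 0" using ipcnj[of "lam a" w] orth[OF that] by simp
      finally have "Re (ip (w - lam a) (w - lam a)) = Re (ip w w) + Re (ip (lam a) (lam a))"
        using orth[OF that] by simp
      then have "(hnorm ip w)^2 \<le> (hnorm ip (w - lam a))^2"
        using hsq ip_pos(2)[OF H, of "lam a"] by simp
      then show ?thesis using hnn by (meson power2_le_imp_le)
    qed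
    have "hnorm ip w = 0"
    proof (rule ccontr)
      assume "hnorm ip w \<noteq> 0"
      then have "hnorm ip w > 0" using hnn[of w] by linarith
      then obtain y where "y \<in> lam ` A0" "hnorm ip (w - y) < hnorm ip w"
        using lam_dense unfolding hdense_def by blast
      then show False using ge by force
    qed
    then have "Re (ip w w) = 0" using hsq[of w] by simp
    then have "ip w w = 0" using ip_self[OF H, of w] by simp
    then have "z1 - z2 = 0" using ip_nondeg[OF H, of "z1 - z2"] unfolding w_def by blast
    then show ?thesis by simp
  qed
  obtain p where p_sn: "seminorm_on sA A0 p" and p_cont: "cont_seminorm_on P A0 p"
     and p_bd: "\<forall>a\<in>A0. Re (\<omega>0 (mul (star a) a)) \<le> (p a)\<^sup>2" using w0_bound by blast
  obtain F K where F: "finite F" "F \<subseteq> P" "K \<ge> 0" "\<forall>x\<in>A0. p x \<le> K * (\<Sum>q\<in>F. q x)"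
    using csn_obtain[OF p_cont Pnn] by blast
  have p_nn: "p a \<ge> 0" if "a \<in> A0" for a
  proof -
    have ma: "-a \<in> A0" using A0_diff[OF A0_0 that] by simp
    have p0: "p 0 = 0" using p_sn A0_0 sm0[of 0] unfolding seminorm_on_def by (metis mult_zero_left norm_zero)
    have pm: "p (-a) = p a" using p_sn that sm1[of a] unfolding seminorm_on_def
      by (metis mult_cancel_right1 norm_minus_cancel norm_one)
    have "p (a + -a) \<le> p a + p (-a)" using p_sn that ma unfolding seminorm_on_def by blast
    then show ?thesis using p0 pm by simp
  qed
  have lam_p: "hnorm ip (lam a) \<le> p a" if "a \<in> A0" for a
  proof -
    have "(hnorm ip (lam a))^2 = Re (ip (lam a) (lam a))" by (rule hsq)
    also have "\<dots> = Re (\<omega>0 (mul (star a) a))" using lam_ip that w_ext A0_mul A0_star by simp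
    also have "\<dots> \<le> (p a)^2" using p_bd that by blast
    finally show ?thesis using p_nn[OF that] by (meson power2_le_imp_le)
  qed
  have csn_c: "cont_seminorm_on P UNIV (\<lambda>z. cmod (\<omega> (mul c z)))" if "c \<in> A0" for c
  proof (rule csn_comp[OF w_cont _ Pnn])
    have "cont_map P (\<lambda>a. mul c a)" using cmul[OF that] by (rule conjunct2)
    then show "\<forall>q\<in>P. cont_seminorm_on P UNIV (\<lambda>x. q (mul c x))" unfolding cont_map_def .
  qed
  have lam_bound: "hnorm ip (lam y) \<le> K * (\<Sum>q\<in>F. q y)" for y
  proof (rule ccontr)
    define N where "N = hnorm ip (lam y)"
    define B where "B = K * (\<Sum>q\<in>F. q y)"
    assume "\<not> hnorm ip (lam y) \<le> K * (\<Sum>q\<in>F. q y)"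
    then have NB: "N > B" unfolding N_def B_def by simp
    have B0: "B \<ge> 0" unfolding B_def using F(3) sum_nonneg_P[OF Pnn F(2)] by simp
    define \<delta> where "\<delta> = min 1 (N * (N - B) / (2 * (2 * N + B + 2)))"
    have NNB: "N * (N - B) > 0" using NB B0 by simp
    have dpos: "\<delta> > 0" using NB B0 NNB unfolding \<delta>_def by simp
    have d1: "\<delta> \<le> 1" unfolding \<delta>_def by simp
    have "\<delta> \<le> N * (N - B) / (2 * (2 * N + B + 2))" unfolding \<delta>_def by simp
    then have d2: "\<delta> * (2 * (2 * N + B + 2)) \<le> N * (N - B)"
      using NB B0 by (simp add: pos_le_divide_eq)
    obtain c where c: "c \<in> A0" "hnorm ip (lam y - lam c) < \<delta>"
      using lam_dense dpos unfolding hdense_def by blast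
    have hc: "hnorm ip (lam c) \<le> N + \<delta>"
      using htri[of "lam y" "-(lam y - lam c)"] hmin[of "lam y - lam c"] c(2) unfolding N_def by simp
    obtain G K2 where G: "finite G" "G \<subseteq> P" "K2 \<ge> 0"
        "\<forall>z\<in>UNIV. cmod (\<omega> (mul (star c) z)) \<le> K2 * (\<Sum>q\<in>G. q z)"
      using csn_obtain[OF csn_c[OF A0_star[OF c(1)]] Pnn] by blast
    define \<eta> where "\<eta> = \<delta> / (K + K2 + 1)"
    have epos: "\<eta> > 0" using dpos F(3) G(3) unfolding \<eta>_def by simp
    have eK1: "K * \<eta> \<le> \<delta>" using dpos F(3) G(3) unfolding \<eta>_def by (simp add: field_simps)
    have eK2: "K2 * \<eta> \<le> \<delta>" using dpos F(3) G(3) unfolding \<eta>_def by (simp add: field_simps)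
    have Ufin: "finite (F \<union> G)" using F(1) G(1) by simp
    have UP: "F \<union> G \<subseteq> P" using F(2) G(2) by simp
    have "\<exists>y'\<in>A0. (\<Sum>q\<in>F \<union> G. q (y - y')) < \<eta>"
      using dense[rule_format, OF Ufin UP epos] .
    then obtain y' where y': "y' \<in> A0" "(\<Sum>q\<in>F \<union> G. q (y - y')) < \<eta>" by blast
    have "(\<Sum>q\<in>F. q (y - y')) \<le> (\<Sum>q\<in>F \<union> G. q (y - y'))"
      by (rule sum_mono_P[OF Pnn Ufin Un_upper1 UP])
    then have sF: "(\<Sum>q\<in>F. q (y - y')) \<le> \<eta>" using y'(2) by linarith
    have "(\<Sum>q\<in>G. q (y - y')) \<le> (\<Sum>q\<in>F \<union> G. q (y - y'))"
      by (rule sum_mono_P[OF Pnn Ufin Un_upper2 UP])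
    then have sG: "(\<Sum>q\<in>G. q (y - y')) \<le> \<eta>" using y'(2) by linarith
    have py': "p y' \<le> B + \<delta>"
    proof -
      have 1: "p y' \<le> K * (\<Sum>q\<in>F. q y')" using F(4) y'(1) by blast
      have "(\<Sum>q\<in>F. q y') \<le> (\<Sum>q\<in>F. q y + q (y - y'))"
      proof (rule sum_mono)
        fix q assume q: "q \<in> F"
        then have qP: "q \<in> P" using F(2) by blast
        have "y' = y + - (y - y')" by simp
        then have "q y' \<le> q y + q (-(y - y'))" using sn_tri[OF qP] by metis
        then show "q y' \<le> q y + q (y - y')" using sn_minus[OF qP, of "y - y'"] by simp
      qed
      then have 2: "K * (\<Sum>q\<in>F. q y') \<le> K * (\<Sum>q\<in>F. q y + q (y - y'))"
        using F(3) by (rule mult_left_mono)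
      have 3: "K * (\<Sum>q\<in>F. q y + q (y - y')) = B + K * (\<Sum>q\<in>F. q (y - y'))"
        unfolding B_def by (simp add: sum.distrib distrib_left)
      have 4: "K * (\<Sum>q\<in>F. q (y - y')) \<le> K * \<eta>" using sF F(3) by (rule mult_left_mono)
      show ?thesis using 1 2 3 4 eK1 by linarith
    qed
    have hy': "hnorm ip (lam y') \<le> B + \<delta>" using lam_p[OF y'(1)] py' by linarith
    have e1: "ip (lam y) (lam y) = ip (lam y) (lam c) + ip (lam y) (lam y - lam c)" by (simp add: ipd2)
    have e2: "ip (lam y) (lam c) = \<omega> (mul (star c) y') + \<omega> (mul (star c) (y - y'))"
      using lam_ip c(1) mul_diff2[OF A0_star[OF c(1)]] w_diff by simp
    have e3: "\<omega> (mul (star c) y') = ip (lam y') (lam c)" using lam_ip c(1) by simp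
    have b1: "cmod (ip (lam y) (lam y - lam c)) \<le> N * \<delta>"
    proof -
      have "N * hnorm ip (lam y - lam c) \<le> N * \<delta>" using c(2) hnn unfolding N_def
        by (simp add: mult_left_mono)
      then show ?thesis using CS[of "lam y" "lam y - lam c"] unfolding N_def by linarith
    qed
    have b2: "cmod (\<omega> (mul (star c) (y - y'))) \<le> \<delta>"
    proof -
      have "K2 * (\<Sum>q\<in>G. q (y - y')) \<le> K2 * \<eta>" using sG G(3) by (rule mult_left_mono)
      then show ?thesis using G(4) eK2 by (meson UNIV_I order_trans)
    qed
    have b3: "cmod (ip (lam y') (lam c)) \<le> (B + \<delta>) * (N + \<delta>)"
    proof -
      have "hnorm ip (lam y') * hnorm ip (lam c) \<le> (B + \<delta>) * (N + \<delta>)"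
        by (rule mult_mono[OF hy' hc]) (use B0 dpos hnn in auto)
      then show ?thesis using CS[of "lam y'" "lam c"] by linarith
    qed
    have e4: "ip (lam y) (lam y) = ip (lam y') (lam c) + \<omega> (mul (star c) (y - y')) + ip (lam y) (lam y - lam c)"
      using e1 e2 e3 by simp
    have "cmod (ip (lam y) (lam y)) \<le> cmod (ip (lam y') (lam c)) + cmod (\<omega> (mul (star c) (y - y'))) + cmod (ip (lam y) (lam y - lam c))"
      unfolding e4 by (meson add_mono norm_triangle_ineq order_refl order_trans)
    then have "cmod (ip (lam y) (lam y)) \<le> (B + \<delta>) * (N + \<delta>) + \<delta> + N * \<delta>" using b1 b2 b3 by linarith
    moreover have "N^2 = Re (ip (lam y) (lam y))" unfolding N_def by (rule hsq)
    moreover have "Re (ip (lam y) (lam y)) \<le> cmod (ip (lam y) (lam y))" by (rule complex_Re_le_cmod)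
    ultimately have fin: "N * N \<le> (B + \<delta>) * (N + \<delta>) + \<delta> + N * \<delta>" by (simp add: power2_eq_square)
    have dd: "\<delta> * \<delta> \<le> \<delta>" using d1 dpos by (simp add: mult_left_le)
    show False using fin dd d2 NNB by (simp add: algebra_simps)
  qed
  have nrm: "cont_seminorm_on P UNIV (\<lambda>y. hnorm ip (lam y))"
    unfolding cont_seminorm_on_def using lam_bound F by blast
  have Lc1: "cont_seminorm_on P UNIV (\<lambda>z. hnorm ip (lam (mul z a)))" if "a \<in> A0" for a
  proof (rule csn_comp[OF nrm _ Pnn])
    have "cont_map P (\<lambda>z. mul z a)" using cmul[OF that] by (rule conjunct1)
    then show "\<forall>q\<in>P. cont_seminorm_on P UNIV (\<lambda>x. q (mul x a))" unfolding cont_map_def .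
  qed
  have Lc2: "cont_seminorm_on P UNIV (\<lambda>z. hnorm ip (lam (mul (star z) b)))" if "b \<in> A0" for b
  proof (rule csn_comp[OF Lc1[OF that] _ Pnn])
    show "\<forall>q\<in>P. cont_seminorm_on P UNIV (\<lambda>x. q (star x))" using cstar unfolding cont_map_def .
  qed
  have ext: "ip (lam (mul x a)) w = ip v (lam (mul (star x) b))"
    if a: "a \<in> A0" and b: "b \<in> A0" and eq: "\<forall>x\<in>A0. ip (lam (mul x a)) w = ip v (lam (mul (star x) b))"
    for x a b w v
  proof (rule ext_dense[where f = "\<lambda>x. ip (lam (mul x a)) w" and g = "\<lambda>x. ip v (lam (mul (star x) b))"
        and \<phi> = "\<lambda>z. hnorm ip w * hnorm ip (lam (mul z a))" and \<psi> = "\<lambda>z. hnorm ip v * hnorm ip (lam (mul (star z) b))"])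
    show "\<forall>q\<in>P. \<forall>x. 0 \<le> q x" by (rule Pnn)
    show "\<forall>a F. finite F \<longrightarrow> F \<subseteq> P \<longrightarrow> (\<forall>eps>0. \<exists>x\<in>A0. (\<Sum>q\<in>F. q (a - x)) < eps)" by (rule dense)
    show "\<forall>x\<in>A0. ip (lam (mul x a)) w = ip v (lam (mul (star x) b))" by (rule eq)
    show "\<forall>x y. cmod (ip (lam (mul x a)) w - ip (lam (mul y a)) w) \<le> hnorm ip w * hnorm ip (lam (mul (x - y) a))"
    proof (intro allI)
      fix x y
      have "ip (lam (mul x a)) w - ip (lam (mul y a)) w = ip (lam (mul (x - y) a)) w"
        using mul_diff1[OF a] lam_diff ipd1 by simp
      then show "cmod (ip (lam (mul x a)) w - ip (lam (mul y a)) w) \<le> hnorm ip w * hnorm ip (lam (mul (x - y) a))"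
        using CS[of "lam (mul (x-y) a)" w] by (simp add: mult.commute)
    qed
    show "\<forall>x y. cmod (ip v (lam (mul (star x) b)) - ip v (lam (mul (star y) b))) \<le> hnorm ip v * hnorm ip (lam (mul (star (x - y)) b))"
    proof (intro allI)
      fix x y
      have "ip v (lam (mul (star x) b)) - ip v (lam (mul (star y) b)) = ip v (lam (mul (star (x - y)) b))"
        using mul_diff1[OF b] lam_diff ipd2 star_diff by simp
      then show "cmod (ip v (lam (mul (star x) b)) - ip v (lam (mul (star y) b))) \<le> hnorm ip v * hnorm ip (lam (mul (star (x - y)) b))"
        using CS[of v "lam (mul (star (x-y)) b)"] by simp
    qed
    show "cont_seminorm_on P UNIV (\<lambda>z. hnorm ip w * hnorm ip (lam (mul z a)))"
      by (rule csn_scale[OF Lc1[OF a] Pnn hnn])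
    show "cont_seminorm_on P UNIV (\<lambda>z. hnorm ip v * hnorm ip (lam (mul (star z) b)))"
      by (rule csn_scale[OF Lc2[OF b] Pnn hnn])
  qed
  have dag: "dagger ip (lam ` A0) (pi x) (lam b) = lam (mul (star x) b)" if b: "b \<in> A0" for x b
  proof -
    have key: "ip (pi x \<xi>) (lam b) = ip \<xi> (lam (mul (star x) b))" if xi: "\<xi> \<in> lam ` A0" for \<xi>
    proof -
      obtain a where a: "a \<in> A0" "\<xi> = lam a" using xi by blast
      have "ip (lam (mul x a)) (lam b) = ip (lam a) (lam (mul (star x) b))"
      proof (rule ext[OF a(1) b])
        show "\<forall>x\<in>A0. ip (lam (mul x a)) (lam b) = ip (lam a) (lam (mul (star x) b))"
        proof
          fix x assume x: "x \<in> A0"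
          have 1: "ip (lam (mul x a)) (lam b) = \<omega> (mul (star b) (mul x a))" using lam_ip b by blast
          have 2: "ip (lam a) (lam (mul (star x) b)) = \<omega> (mul (star (mul (star x) b)) a)"
            using lam_ip A0_mul[OF A0_star[OF x] b] by blast
          have 3: "star (mul (star x) b) = mul (star b) x" using star_mul[OF A0_star[OF x]] star_star by simp
          have 4: "mul (mul (star b) x) a = mul (star b) (mul x a)" using assoc[OF x a(1)] .
          show "ip (lam (mul x a)) (lam b) = ip (lam a) (lam (mul (star x) b))"
            unfolding 1 2 3 4 ..
        qed
      qed
      then show ?thesis using a pi_def by simp
    qed
    show ?thesis unfolding dagger_def
    proof (rule the_equality)
      show "\<forall>\<xi>\<in>lam ` A0. ip (pi x \<xi>) (lam b) = ip \<xi> (lam (mul (star x) b))" using key by blast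
    next
      fix \<zeta> assume h: "\<forall>\<xi>\<in>lam ` A0. ip (pi x \<xi>) (lam b) = ip \<xi> \<zeta>"
      show "\<zeta> = lam (mul (star x) b)" by (rule uniq) (use h key in auto)
    qed
  qed
  show ?thesis
  proof
    show "weak_commutant sH ip (lam ` A0) (pi ` UNIV) \<subseteq> weak_commutant sH ip (lam ` A0) (pi ` A0)"
      unfolding weak_commutant_def by blast
    show "weak_commutant sH ip (lam ` A0) (pi ` A0) \<subseteq> weak_commutant sH ip (lam ` A0) (pi ` UNIV)"
    proof
      fix C assume "C \<in> weak_commutant sH ip (lam ` A0) (pi ` A0)"
      then have bC: "bounded_op sH ip C" and hC: "\<forall>X\<in>pi ` A0. \<forall>\<xi>\<in>lam ` A0. \<forall>\<eta>\<in>lam ` A0.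
          ip (X \<xi>) (hadj ip C \<eta>) = ip (C \<xi>) (dagger ip (lam ` A0) X \<eta>)"
        unfolding weak_commutant_def by blast+
      have gen: "ip (pi x \<xi>) (hadj ip C \<eta>) = ip (C \<xi>) (dagger ip (lam ` A0) (pi x) \<eta>)"
        if xi: "\<xi> \<in> lam ` A0" and eta: "\<eta> \<in> lam ` A0" for x \<xi> \<eta>
      proof -
        obtain a where a: "a \<in> A0" "\<xi> = lam a" using xi by blast
        obtain b where b: "b \<in> A0" "\<eta> = lam b" using eta by blast
        have "ip (lam (mul x a)) (hadj ip C (lam b)) = ip (C (lam a)) (lam (mul (star x) b))"
        proof (rule ext[OF a(1) b(1)])
          show "\<forall>x\<in>A0. ip (lam (mul x a)) (hadj ip C (lam b)) = ip (C (lam a)) (lam (mul (star x) b))"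
          proof
            fix x assume x: "x \<in> A0"
            have "ip (pi x (lam a)) (hadj ip C (lam b)) = ip (C (lam a)) (dagger ip (lam ` A0) (pi x) (lam b))"
              using hC x a(1) b(1) by blast
            then show "ip (lam (mul x a)) (hadj ip C (lam b)) = ip (C (lam a)) (lam (mul (star x) b))"
              using pi_def a(1) dag[OF b(1)] by simp
          qed
        qed
        then show ?thesis using a b pi_def dag[OF b(1)] by simp
      qed
      then show "C \<in> weak_commutant sH ip (lam ` A0) (pi ` UNIV)"
        unfolding weak_commutant_def using bC by blast
    qed
  qed
qed
end
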